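(* Let $f:\mathbb{R}^n\to\mathbb{R}$ ($n\ge 1$) be a multivariate polynomial of degree at most $4$, and let $\mu_f:\mathbb{R}^n\times(0,\infty)\to\mathbb{R}$ be its Steklov function, \[ \mu_f(x,t) := \frac{1}{(2t)^n}\int_{x_n-t}^{x_n+t}\cdots\int_{x_1-t}^{x_1+t} f(\tau_1,\ldots,\tau_n)\,d\tau_1\cdots d\tau_n,\qquad x=(x_1,\ldots,x_n). \] Then for all $x\in\mathbb{R}^n$ and $t>0$, \[ \mu_f(x,t) = f(x) + \frac{t^2}{6}\sum_{i=1}^n f_{ii}(x) + \left(\frac{1}{120}\sum_{i=1}^n f_{iiii} + \frac{1}{36}\sum_{\substack{i,j=1\\ j>i}}^n f_{iijj}\right)t^4, \] where $f_{ii}:=\partial^2 f/\partial x_i^2$, $f_{iiii}:=\partial^4 f/\partial x_i^4$ and $f_{iijj}:=\partial^4 f/\partial x_i^2\partial x_j^2$ (the fourth-order derivatives being constants). *)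

theory Defs
  imports "HOL-Analysis.Analysis"
begin

definition exps_le :: "nat \<Rightarrow> ('n::finite \<Rightarrow> nat) set" where
  "exps_le d = {\<alpha>. (\<Sum>i\<in>UNIV. \<alpha> i) \<le> d}"

definition poly_fun_deg_le :: "nat \<Rightarrow> (real^'n::finite \<Rightarrow> real) \<Rightarrow> bool" where
  "poly_fun_deg_le d f \<longleftrightarrow>
     (\<exists>c :: ('n \<Rightarrow> nat) \<Rightarrow> real.
        \<forall>x. f x = (\<Sum>\<alpha>\<in>exps_le d. c \<alpha> * (\<Prod>i\<in>UNIV. (x $ i) ^ (\<alpha> i))))"

definition partial :: "'n::finite \<Rightarrow> (real^'n \<Rightarrow> real) \<Rightarrow> real^'n \<Rightarrow> real" where
  "partial i g x = deriv (\<lambda>s. g (x + s *\<^sub>R axis i 1)) 0"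

definition steklov :: "(real^'n::finite \<Rightarrow> real) \<Rightarrow> real^'n \<Rightarrow> real \<Rightarrow> real" where
  "steklov f x t =
     integral (cbox (\<chi> i. x $ i - t) (\<chi> i. x $ i + t)) f / (2 * t) ^ CARD('n)"

end

theory Submission
  imports Defs
begin


lemma integral_lborel_prod_Basis:
  fixes f :: "'a::euclidean_space \<Rightarrow> real \<Rightarrow> real"
  assumes int: "\<And>b. b \<in> Basis \<Longrightarrow> integrable lborel (f b)"
  shows "(\<integral>x. (\<Prod>b\<in>Basis. f b (x \<bullet> b)) \<partial>lborel) = (\<Prod>b\<in>Basis. \<integral>x. f b x \<partial>lborel)"
proof -
  interpret product_sigma_finite "\<lambda>_::'a. lborel::real measure" by standard
  have meas[measurable]: "\<And>b. b \<in> Basis \<Longrightarrow> f b \<in> borel_measurable borel"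
    using int by auto
  have "(\<integral>x. (\<Prod>b\<in>Basis. f b (x \<bullet> b)) \<partial>(lborel::'a measure)) =
     (\<integral>x. (\<Prod>b\<in>Basis. f b (x \<bullet> b)) \<partial>(distr (\<Pi>\<^sub>M b\<in>Basis. lborel) borel (\<lambda>f. \<Sum>b\<in>Basis. f b *\<^sub>R b)))"
    by (simp only: lborel_eq[where 'a='a])
  also have "\<dots> = (\<integral>y. (\<Prod>b\<in>Basis. f b ((\<Sum>b'\<in>Basis. y b' *\<^sub>R b') \<bullet> b)) \<partial>(\<Pi>\<^sub>M b\<in>Basis. lborel))"
    by (rule integral_distr) auto
  also have "\<dots> = (\<integral>y. (\<Prod>b\<in>Basis. f b (y b)) \<partial>(\<Pi>\<^sub>M b\<in>Basis. lborel))"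
  proof (rule Bochner_Integration.integral_cong[OF refl], rule prod.cong[OF refl])
    fix y :: "'a \<Rightarrow> real" and b :: 'a assume b: "b \<in> Basis"
    have "(\<Sum>b'\<in>Basis. y b' *\<^sub>R b') \<bullet> b = y b"
      using b by (simp add: inner_sum_left inner_Basis if_distrib cong: if_cong)
    then show "f b ((\<Sum>b'\<in>Basis. y b' *\<^sub>R b') \<bullet> b) = f b (y b)" by simp
  qed
  also have "\<dots> = (\<Prod>b\<in>Basis. \<integral>x. f b x \<partial>lborel)"
    by (rule product_integral_prod) (auto intro: int)
  finally show ?thesis .
qed

definition mon :: "('n::finite \<Rightarrow> nat) \<Rightarrow> real^'n \<Rightarrow> real" where
  "mon \<alpha> y = (\<Prod>i\<in>UNIV. (y $ i) ^ (\<alpha> i))"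

lemma continuous_mon: "continuous_on S (mon \<alpha>)"
  unfolding mon_def by (intro continuous_intros)

lemma Basis_vec_real: "(Basis :: (real^'n::finite) set) = range (\<lambda>i. axis i 1)"
  by (auto simp: Basis_vec_def)

lemma prod_Basis_vec:
  fixes G :: "real^'n::finite \<Rightarrow> 'b::comm_monoid_mult"
  shows "(\<Prod>b\<in>Basis. G b) = (\<Prod>i\<in>UNIV. G (axis i 1))"
  unfolding Basis_vec_real by (subst prod.reindex) (auto simp: inj_on_def axis_eq_axis)

lemma integral_cbox_mon:
  fixes l u :: "real^'n::finite"
  assumes lu: "\<And>i. l$i \<le> u$i"
  shows "integral (cbox l u) (mon \<alpha>) = (\<Prod>i\<in>UNIV. (u$i ^ Suc (\<alpha> i) - l$i ^ Suc (\<alpha> i)) / Suc (\<alpha> i))"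
proof -
  define idx where "idx b = (SOME i. b = axis i (1::real))" for b :: "real^'n"
  have idx: "idx (axis i 1) = i" for i
    unfolding idx_def by (rule some_equality) (auto simp: axis_eq_axis)
  define F where "F b s = s ^ (\<alpha> (idx b)) * indicator {l \<bullet> b .. u \<bullet> b} s" for b s
  have si: "set_integrable lborel (cbox l u) (mon \<alpha>)"
    unfolding set_integrable_def by (rule borel_integrable_compact) (auto intro: continuous_mon)
  have "integral (cbox l u) (mon \<alpha>) = (LINT x:cbox l u|lborel. mon \<alpha> x)"
    using set_borel_integral_eq_integral(2)[OF si] by simp
  also have "\<dots> = (\<integral>x. (\<Prod>b\<in>Basis. F b (x \<bullet> b)) \<partial>lborel)"
    unfolding set_lebesgue_integral_def
  proof (rule Bochner_Integration.integral_cong[OF refl])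
    fix x :: "real^'n"
    have "(\<Prod>b\<in>Basis. F b (x \<bullet> b)) = (\<Prod>i\<in>UNIV. (x$i)^(\<alpha> i) * indicator {l$i..u$i} (x$i))"
      by (simp add: prod_Basis_vec F_def idx cart_eq_inner_axis)
    also have "\<dots> = indicator (cbox l u) x *\<^sub>R mon \<alpha> x"
      by (auto simp: prod.distrib mon_def indicator_def mem_box_cart)
    finally show "indicator (cbox l u) x *\<^sub>R mon \<alpha> x = (\<Prod>b\<in>Basis. F b (x \<bullet> b))" by simp
  qed
  also have "\<dots> = (\<Prod>b\<in>Basis. \<integral>x. F b x \<partial>lborel)"
  proof (rule integral_lborel_prod_Basis)
    fix b :: "real^'n" assume "b \<in> Basis"
    show "integrable lborel (F b)"
      unfolding F_def using borel_integrable_compact[of "{l \<bullet> b .. u \<bullet> b}" "\<lambda>s. s ^ (\<alpha> (idx b))"]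
      by (simp add: continuous_on_power continuous_on_id mult.commute)
  qed
  also have "\<dots> = (\<Prod>i\<in>UNIV. (u$i ^ Suc (\<alpha> i) - l$i ^ Suc (\<alpha> i)) / Suc (\<alpha> i))"
    by (simp add: prod_Basis_vec F_def idx cart_eq_inner_axis[symmetric] integral_power lu del: of_nat_Suc)
  finally show ?thesis .
qed

lemma mon_upd: "mon (\<alpha>(i:=k)) y = y$i^k * (\<Prod>j\<in>UNIV-{i}. y$j^(\<alpha> j))"
  unfolding mon_def by (subst prod.remove[of UNIV i]) (auto intro!: prod.cong)

lemma mon_shift: "mon \<alpha> (y + s *\<^sub>R axis i 1) = (y$i + s)^(\<alpha> i) * (\<Prod>j\<in>UNIV-{i}. y$j^(\<alpha> j))"
  unfolding mon_def by (subst prod.remove[of UNIV i]) (auto intro!: prod.cong simp: axis_def)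

lemma mon_deriv:
  "((\<lambda>s. mon \<alpha> (y + s *\<^sub>R axis i 1)) has_field_derivative (real (\<alpha> i) * mon (\<alpha>(i := \<alpha> i - 1)) y)) (at 0)"
proof -
  have "((\<lambda>s. (y$i + s)^(\<alpha> i) * (\<Prod>j\<in>UNIV-{i}. y$j^(\<alpha> j))) has_field_derivative
          (real (\<alpha> i) * (y$i + 0)^(\<alpha> i - 1) * 1) * (\<Prod>j\<in>UNIV-{i}. y$j^(\<alpha> j))) (at 0)"
    by (intro DERIV_cmult_right DERIV_power derivative_eq_intros) auto
  then show ?thesis by (simp add: mon_shift mon_upd mult.assoc)
qed

lemma partial_sum:
  assumes "finite S"
  shows "partial i (\<lambda>y. \<Sum>a\<in>S. c a * mon (g a) y) =
         (\<lambda>y. \<Sum>a\<in>S. (c a * real (g a i)) * mon ((g a)(i := g a i - 1)) y)"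
proof
  fix y
  have "((\<lambda>s. \<Sum>a\<in>S. c a * mon (g a) (y + s *\<^sub>R axis i 1)) has_field_derivative
         (\<Sum>a\<in>S. c a * (real (g a i) * mon ((g a)(i := g a i - 1)) y))) (at 0)"
    by (intro DERIV_sum DERIV_cmult mon_deriv)
  then show "partial i (\<lambda>y. \<Sum>a\<in>S. c a * mon (g a) y) y =
         (\<Sum>a\<in>S. (c a * real (g a i)) * mon ((g a)(i := g a i - 1)) y)"
    unfolding partial_def by (simp add: DERIV_imp_deriv mult.assoc)
qed



definition E1 :: "nat \<Rightarrow> real \<Rightarrow> real \<Rightarrow> real" where
  "E1 k z t = ((z+t)^Suc k - (z-t)^Suc k) / real (Suc k) / (2*t)"

lemma E1_formula:
  assumes "k \<le> 4" "t \<noteq> 0"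
  shows "E1 k z t = z^k + t^2/6 * (real k * real (k-1) * z^(k-2))
           + t^4/120 * (real k * real (k-1) * real (k-2) * real (k-3) * z^(k-4))"
proof -
  have "k = 0 \<or> k = 1 \<or> k = 2 \<or> k = 3 \<or> k = 4" using assms by auto
  then show ?thesis using assms(2)
    apply (elim disjE)
    apply (simp_all add: E1_def field_simps)
    apply (simp_all add: eval_nat_numeral algebra_simps)
    done
qed

lemma sum_single: "finite A \<Longrightarrow> z \<in> A \<Longrightarrow> (\<And>i. i \<in> A \<Longrightarrow> i \<noteq> z \<Longrightarrow> F i = 0) \<Longrightarrow> sum F A = F z"
  by (subst sum.remove[of A z]) (auto intro!: sum.neutral)

lemma sum_two:
  assumes "finite A" "p \<noteq> q" "p \<in> A" "q \<in> A" "\<And>i. i \<in> A \<Longrightarrow> i \<noteq> p \<Longrightarrow> i \<noteq> q \<Longrightarrow> F i = 0"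
  shows "sum F A = F p + F q"
proof -
  have "sum F {p,q} = sum F A" by (rule sum.mono_neutral_left) (use assms in auto)
  then show ?thesis using assms(2) by simp
qed

lemma prod_two:
  assumes "finite A" "p \<noteq> q" "p \<in> A" "q \<in> A" "\<And>i. i \<in> A \<Longrightarrow> i \<noteq> p \<Longrightarrow> i \<noteq> q \<Longrightarrow> F i = 1"
  shows "prod F A = F p * F q"
proof -
  have "prod F {p,q} = prod F A" by (rule prod.mono_neutral_left) (use assms in auto)
  then show ?thesis using assms(2) by simp
qed

lemma mon_split: "mon a x = x$p^(a p) * (\<Prod>j\<in>UNIV-{p}. x$j^(a j))"
  using mon_upd[of a p "a p" x] by simp

lemma mon_pq: "p \<noteq> q \<Longrightarrow> (\<And>l. l \<noteq> p \<Longrightarrow> l \<noteq> q \<Longrightarrow> b l = 0) \<Longrightarrow> mon b x = x$p^(b p) * x$q^(b q)"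
  unfolding mon_def by (rule prod_two) auto

lemma key:
  fixes a :: "'n::{finite,linorder} \<Rightarrow> nat" and x :: "(real, 'n) vec"
  assumes deg: "sum a UNIV \<le> 4" and t: "t \<noteq> 0"
  shows "(\<Prod>i\<in>UNIV. E1 (a i) (x$i) t) =
    mon a x + t^2/6 * (\<Sum>i\<in>UNIV. real (a i) * real (a i - 1) * mon (a(i:=a i - 2)) x)
    + (1/120 * (\<Sum>i\<in>UNIV. real (a i) * real (a i - 1) * real (a i - 2) * real (a i - 3) * mon (a(i:=a i - 4)) x)
       + 1/36 * (\<Sum>(i,j)\<in>{(i,j). i < j}. real (a j) * real (a j - 1) * real (a i) * real (a i - 1)
                   * mon (a(j:=a j - 2, i:=a i - 2)) x)) * t^4"
proof -
  define T where "T = {i. 2 \<le> a i}"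
  have ale: "a i \<le> 4" for i using deg member_le_sum[of i UNIV a] by auto
  have Eb: "E1 (a i) (x$i) t = x$i^(a i) + t^2/6 * (real (a i) * real (a i - 1) * x$i^(a i - 2))
           + t^4/120 * (real (a i) * real (a i - 1) * real (a i - 2) * real (a i - 3) * x$i^(a i - 4))" for i
    using E1_formula[OF ale t] .
  have small: "a i \<le> 1 \<Longrightarrow> real (a i) * real (a i - 1) = 0" for i
    by (cases "a i") auto
  have small4: "a i \<le> 3 \<Longrightarrow> real (a i) * real (a i - 1) * real (a i - 2) * real (a i - 3) = 0" for i
    by (cases "a i = 3") (auto simp: small)
  have "2 * card T = (\<Sum>i\<in>T. 2)" by simp
  also have "\<dots> \<le> (\<Sum>i\<in>T. a i)" by (rule sum_mono) (auto simp: T_def)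
  also have "\<dots> \<le> sum a UNIV" by (rule sum_mono2) auto
  finally have cT: "card T \<le> 2" using deg by linarith
  have fT: "finite T" by simp
  consider "card T = 0" | "card T = 1" | "card T = 2" using cT by linarith
  then show ?thesis
  proof cases
    case 1
    then have T0: "T = {}" using fT by simp
    then have le1: "a i \<le> 1" for i unfolding T_def using not_less_eq_eq by auto
    have E: "E1 (a i) (x$i) t = x$i^(a i)" for i using Eb[of i] small[OF le1] small4[of i] le1[of i] by simp
    have Z2: "(\<Sum>i\<in>UNIV. real (a i) * real (a i - 1) * mon (a(i:=a i - 2)) x) = 0"
      by (rule sum.neutral) (use le1 in \<open>simp add: le_Suc_eq\<close>)
    have Z4: "(\<Sum>i\<in>UNIV. real (a i) * real (a i - 1) * real (a i - 2) * real (a i - 3) * mon (a(i:=a i - 4)) x) = 0"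
      by (rule sum.neutral) (use le1 in \<open>simp add: le_Suc_eq\<close>)
    have ZP: "(\<Sum>(i,j)\<in>{(i,j). i < j}. real (a j) * real (a j - 1) * real (a i) * real (a i - 1)
                   * mon (a(j:=a j - 2, i:=a i - 2)) x) = 0"
      by (rule sum.neutral) (use le1 in \<open>simp add: le_Suc_eq case_prod_beta\<close>)
    show ?thesis unfolding Z2 Z4 ZP by (simp add: E mon_def)
  next
    case 2
    then obtain p where Tp: "T = {p}" by (auto simp: card_1_singleton_iff)
    then have le1: "j \<noteq> p \<Longrightarrow> a j \<le> 1" for j unfolding T_def using not_less_eq_eq by (auto simp: set_eq_iff)
    have E: "j \<noteq> p \<Longrightarrow> E1 (a j) (x$j) t = x$j^(a j)" for j
      using Eb[of j] small[OF le1] small4[of j] le1[of j] by simp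
    define R where "R = (\<Prod>j\<in>UNIV-{p}. x$j^(a j))"
    have L: "(\<Prod>i\<in>UNIV. E1 (a i) (x$i) t) = E1 (a p) (x$p) t * R"
      unfolding R_def by (subst prod.remove[of UNIV p]) (auto simp: E intro!: prod.cong)
    have M: "mon a x = x$p^(a p) * R" unfolding R_def by (rule mon_split)
    have S2: "(\<Sum>i\<in>UNIV. real (a i) * real (a i - 1) * mon (a(i:=a i - 2)) x)
        = real (a p) * real (a p - 1) * (x$p^(a p - 2) * R)"
      by (subst sum_single[of UNIV p]) (use le1 in \<open>auto simp: le_Suc_eq mon_upd R_def\<close>)
    have S4: "(\<Sum>i\<in>UNIV. real (a i) * real (a i - 1) * real (a i - 2) * real (a i - 3) * mon (a(i:=a i - 4)) x)
        = real (a p) * real (a p - 1) * real (a p - 2) * real (a p - 3) * (x$p^(a p - 4) * R)"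
      by (subst sum_single[of UNIV p]) (use le1 in \<open>auto simp: le_Suc_eq mon_upd R_def\<close>)
    have P: "(\<Sum>(i,j)\<in>{(i,j). i < j}. real (a j) * real (a j - 1) * real (a i) * real (a i - 1)
                   * mon (a(j:=a j - 2, i:=a i - 2)) x) = 0"
    proof (rule sum.neutral, clarify)
      fix i j :: 'n assume "i < j"
      then have "i \<noteq> p \<or> j \<noteq> p" by auto
      then show "real (a j) * real (a j - 1) * real (a i) * real (a i - 1) * mon (a(j:=a j - 2, i:=a i - 2)) x = 0"
        using small[OF le1[of i]] small[OF le1[of j]] by auto
    qed
    show ?thesis unfolding L M S2 S4 P Eb[of p] by (simp add: algebra_simps)
  next
    case 3
    then obtain p0 q0 where pq0: "T = {p0, q0}" "p0 \<noteq> q0" by (auto simp: card_2_iff)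
    obtain p q where pq: "T = {p, q}" "p < q"
    proof (cases "p0 < q0")
      case True then show ?thesis using that pq0 by auto
    next
      case False then have "q0 < p0" using pq0(2) by auto
      then show ?thesis using that[of q0 p0] pq0 by auto
    qed
    have pq2: "2 \<le> a p" "2 \<le> a q" using pq unfolding T_def by auto
    have "a p + a q = (\<Sum>i\<in>{p,q}. a i)" using pq by simp
    also have "\<dots> \<le> sum a UNIV" by (rule sum_mono2) auto
    finally have "a p + a q \<le> 4" using deg by linarith
    then have ap: "a p = 2" and aq: "a q = 2" using pq2 by auto
    have al: "a l = 0" if "l \<noteq> p" "l \<noteq> q" for l
    proof -
      have "a p + a q + a l = (\<Sum>i\<in>{p,q,l}. a i)" using pq that by simp
      also have "\<dots> \<le> sum a UNIV" by (rule sum_mono2) auto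
      finally show ?thesis using deg ap aq by linarith
    qed
    have E0: "E1 0 z t = 1" for z using t by (simp add: E1_def)
    have L: "(\<Prod>i\<in>UNIV. E1 (a i) (x$i) t) = E1 2 (x$p) t * E1 2 (x$q) t"
      by (subst prod_two[of UNIV p q]) (use pq in \<open>auto simp: al E0 ap aq\<close>)
    have M: "mon b x = x$p^(b p) * x$q^(b q)" if "\<And>l. l \<noteq> p \<Longrightarrow> l \<noteq> q \<Longrightarrow> b l = 0" for b
      using mon_pq[of p q b x] that pq by auto
    have S2: "(\<Sum>i\<in>UNIV. real (a i) * real (a i - 1) * mon (a(i:=a i - 2)) x)
        = 2 * x$q^2 + 2 * x$p^2"
      by (subst sum_two[of UNIV p q]) (use pq in \<open>auto simp: al ap aq M\<close>)
    have S4: "(\<Sum>i\<in>UNIV. real (a i) * real (a i - 1) * real (a i - 2) * real (a i - 3) * mon (a(i:=a i - 4)) x)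
        = 0"
    proof (rule sum.neutral, rule ballI)
      fix i have "a i \<le> 2" using al[of i] ap aq by (cases "i = p \<or> i = q") auto
      then show "real (a i) * real (a i - 1) * real (a i - 2) * real (a i - 3) * mon (a(i:=a i - 4)) x = 0"
        by simp
    qed
    have P: "(\<Sum>(i,j)\<in>{(i,j). i < j}. real (a j) * real (a j - 1) * real (a i) * real (a i - 1)
                   * mon (a(j:=a j - 2, i:=a i - 2)) x) = 4"
    proof (subst sum_single[of _ "(p,q)"])
      show "finite {(i::'n, j). i < j}" by simp
      show "(p, q) \<in> {(i, j). i < j}" using pq by simp
    next
      fix z assume z: "z \<in> {(i::'n, j). i < j}" "z \<noteq> (p, q)"
      obtain i j where zij: "z = (i,j)" by force
      have "a i = 0 \<or> a j = 0"
        using z zij pq al by (metis case_prod_conv less_asym mem_Collect_eq)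
      then show "(case z of (i, j) \<Rightarrow> real (a j) * real (a j - 1) * real (a i) * real (a i - 1)
                   * mon (a(j:=a j - 2, i:=a i - 2)) x) = 0" using zij by auto
    next
      show "(case (p,q) of (i, j) \<Rightarrow> real (a j) * real (a j - 1) * real (a i) * real (a i - 1)
                   * mon (a(j:=a j - 2, i:=a i - 2)) x) = 4"
        using pq by (simp add: ap aq M al)
    qed
    have Ma: "mon a x = x$p^2 * x$q^2" using M[of a] al ap aq by simp
    show ?thesis unfolding L S2 S4 P Ma using E1_formula[of 2 t] t
      by (simp add: algebra_simps power2_eq_square power4_eq_xxxx)
  qed
qed



theorem theorem1:
  fixes f :: "(real, 'n::{finite,linorder}) vec \<Rightarrow> real" and x :: "(real, 'n) vec" and t :: real
  assumes "poly_fun_deg_le 4 f" and "t > 0"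
  shows "steklov f x t =
           f x + t^2 / 6 * (\<Sum>i\<in>UNIV. partial i (partial i f) x)
           + ((1/120) * (\<Sum>i\<in>UNIV. partial i (partial i (partial i (partial i f))) x)
              + (1/36) * (\<Sum>(i,j)\<in>{(i,j). i < j}.
                            partial i (partial i (partial j (partial j f))) x)) * t^4"
proof -
  define S where "S = (exps_le 4 :: ('n \<Rightarrow> nat) set)"
  obtain c where fc: "\<And>y. f y = (\<Sum>\<alpha>\<in>S. c \<alpha> * (\<Prod>i\<in>UNIV. (y $ i) ^ (\<alpha> i)))"
    using assms(1) unfolding poly_fun_deg_le_def S_def by blast
  have finS: "finite S"
  proof (rule finite_subset)
    show "S \<subseteq> PiE (UNIV::'n set) (\<lambda>_. {..4::nat})"
    proof
      fix a assume "a \<in> S"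
      then have "sum a UNIV \<le> 4" by (simp add: S_def exps_le_def)
      then have "a i \<le> 4" for i using member_le_sum[of i UNIV a] by simp
      then show "a \<in> PiE (UNIV::'n set) (\<lambda>_. {..4::nat})" by (simp add: PiE_UNIV_domain)
    qed
    show "finite (PiE (UNIV::'n set) (\<lambda>_. {..4::nat}))" by (rule finite_PiE) (auto simp: finite_class.finite_UNIV)
  qed
  have feq: "f = (\<lambda>y. \<Sum>a\<in>S. c a * mon a y)"
    by (rule ext) (simp add: fc mon_def)
  have P1: "partial i f = (\<lambda>y. \<Sum>a\<in>S. (c a * real (a i)) * mon (a(i := a i - 1)) y)" for i
    unfolding feq using partial_sum[OF finS, of i c "\<lambda>a. a"] by simp
  have P2: "partial i (partial i f) = (\<lambda>y. \<Sum>a\<in>S. (c a * real (a i) * real (a i - 1)) * mon (a(i := a i - 1 - 1)) y)" for i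
    unfolding P1 using partial_sum[OF finS, of i "\<lambda>a. c a * real (a i)" "\<lambda>a. a(i := a i - 1)"] by simp
  have P3: "partial i (partial i (partial i f)) = (\<lambda>y. \<Sum>a\<in>S. (c a * real (a i) * real (a i - 1) * real (a i - 1 - 1)) * mon (a(i := a i - 1 - 1 - 1)) y)" for i
    unfolding P2 using partial_sum[OF finS, of i "\<lambda>a. c a * real (a i) * real (a i - 1)" "\<lambda>a. a(i := a i - 1 - 1)"] by simp
  have P4: "partial i (partial i (partial i (partial i f))) = (\<lambda>y. \<Sum>a\<in>S. (c a * real (a i) * real (a i - 1) * real (a i - 1 - 1) * real (a i - 1 - 1 - 1)) * mon (a(i := a i - 1 - 1 - 1 - 1)) y)" for i
    unfolding P3 using partial_sum[OF finS, of i "\<lambda>a. c a * real (a i) * real (a i - 1) * real (a i - 1 - 1)" "\<lambda>a. a(i := a i - 1 - 1 - 1)"] by simp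
  have Q3: "partial i (partial j (partial j f)) = (\<lambda>y. \<Sum>a\<in>S. (c a * real (a j) * real (a j - 1) * real (a i)) * mon (a(j := a j - 1 - 1, i := a i - 1)) y)" if "i \<noteq> j" for i j
    unfolding P2 using partial_sum[OF finS, of i "\<lambda>a. c a * real (a j) * real (a j - 1)" "\<lambda>a. a(j := a j - 1 - 1)"] that by simp
  have Q4: "partial i (partial i (partial j (partial j f))) = (\<lambda>y. \<Sum>a\<in>S. (c a * real (a j) * real (a j - 1) * real (a i) * real (a i - 1)) * mon (a(j := a j - 1 - 1, i := a i - 1 - 1)) y)" if "i \<noteq> j" for i j
    unfolding Q3[OF that] using partial_sum[OF finS, of i "\<lambda>a. c a * real (a j) * real (a j - 1) * real (a i)" "\<lambda>a. a(j := a j - 1 - 1, i := a i - 1)"] that by simp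
  have e2: "n - 1 - 1 = n - (2::nat)" "n - 1 - 1 - 1 = n - (3::nat)" "n - 1 - 1 - 1 - 1 = n - (4::nat)" for n by auto
  have D2: "partial i (partial i f) x = (\<Sum>a\<in>S. c a * (real (a i) * real (a i - 1) * mon (a(i:=a i - 2)) x))" for i
    unfolding P2 e2 by (simp add: mult_ac)
  have D4: "partial i (partial i (partial i (partial i f))) x = (\<Sum>a\<in>S. c a * (real (a i) * real (a i - 1) * real (a i - 2) * real (a i - 3) * mon (a(i:=a i - 4)) x))" for i
    unfolding P4 e2 by (simp add: mult_ac)
  have D22: "partial i (partial i (partial j (partial j f))) x = (\<Sum>a\<in>S. c a * (real (a j) * real (a j - 1) * real (a i) * real (a i - 1) * mon (a(j:=a j - 2, i:=a i - 2)) x))" if "i \<noteq> j" for i j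
    unfolding Q4[OF that] e2 by (simp add: mult_ac)
  define l where "l = (\<chi> i. x $ i - t)"
  define u where "u = (\<chi> i. x $ i + t)"
  have lu: "l$i \<le> u$i" for i using assms(2) by (simp add: l_def u_def)
  have "integral (cbox l u) f = (\<Sum>a\<in>S. integral (cbox l u) (\<lambda>y. c a * mon a y))"
    unfolding feq by (rule integral_sum[OF finS]) (intro integrable_continuous continuous_intros continuous_mon)
  also have "\<dots> = (\<Sum>a\<in>S. c a * (\<Prod>i\<in>UNIV. (u$i ^ Suc (a i) - l$i ^ Suc (a i)) / Suc (a i)))"
    by (simp add: integral_cbox_mon[OF lu])
  finally have I: "integral (cbox l u) f = (\<Sum>a\<in>S. c a * (\<Prod>i\<in>UNIV. (u$i ^ Suc (a i) - l$i ^ Suc (a i)) / Suc (a i)))" .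
  have C: "(2 * t) ^ CARD('n) = (\<Prod>i\<in>(UNIV::'n set). 2 * t)" by simp
  have ST: "steklov f x t = (\<Sum>a\<in>S. c a * (\<Prod>i\<in>UNIV. E1 (a i) (x$i) t))"
  proof -
    have "steklov f x t = (\<Sum>a\<in>S. c a * (\<Prod>i\<in>UNIV. (u$i ^ Suc (a i) - l$i ^ Suc (a i)) / Suc (a i))) / (\<Prod>i\<in>(UNIV::'n set). 2 * t)"
      unfolding steklov_def l_def[symmetric] u_def[symmetric] I C ..
    also have "\<dots> = (\<Sum>a\<in>S. c a * ((\<Prod>i\<in>UNIV. (u$i ^ Suc (a i) - l$i ^ Suc (a i)) / Suc (a i)) / (\<Prod>i\<in>(UNIV::'n set). 2 * t)))"
      by (simp only: sum_divide_distrib times_divide_eq_right)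
    also have "\<dots> = (\<Sum>a\<in>S. c a * (\<Prod>i\<in>UNIV. E1 (a i) (x$i) t))"
      by (simp only: prod_dividef[symmetric]) (simp add: E1_def l_def u_def del: of_nat_Suc)
    finally show ?thesis .
  qed
  define A2 where "A2 a = (\<Sum>i\<in>UNIV. real (a i) * real (a i - 1) * mon (a(i:=a i - 2)) x)" for a :: "'n \<Rightarrow> nat"
  define A4 where "A4 a = (\<Sum>i\<in>UNIV. real (a i) * real (a i - 1) * real (a i - 2) * real (a i - 3) * mon (a(i:=a i - 4)) x)" for a :: "'n \<Rightarrow> nat"
  define AP where "AP a = (\<Sum>(i,j)\<in>{(i::'n,j). i < j}. real (a j) * real (a j - 1) * real (a i) * real (a i - 1)
                   * mon (a(j:=a j - 2, i:=a i - 2)) x)" for a :: "'n \<Rightarrow> nat"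
  have K: "(\<Prod>i\<in>UNIV. E1 (a i) (x$i) t) = mon a x + t^2/6 * A2 a + (1/120 * A4 a + 1/36 * AP a) * t^4"
    if "a \<in> S" for a
    unfolding A2_def A4_def AP_def
    by (rule key) (use that assms(2) in \<open>auto simp: S_def exps_le_def\<close>)
  have R0: "f x = (\<Sum>a\<in>S. c a * mon a x)" by (simp add: feq)
  have R2: "(\<Sum>i\<in>UNIV. partial i (partial i f) x) = (\<Sum>a\<in>S. c a * A2 a)"
    unfolding D2 A2_def by (subst sum.swap) (simp add: sum_distrib_left)
  have R4: "(\<Sum>i\<in>UNIV. partial i (partial i (partial i (partial i f))) x) = (\<Sum>a\<in>S. c a * A4 a)"
    unfolding D4 A4_def by (subst sum.swap) (simp add: sum_distrib_left)
  have RP: "(\<Sum>(i,j)\<in>{(i,j). i < j}. partial i (partial i (partial j (partial j f))) x) = (\<Sum>a\<in>S. c a * AP a)"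
  proof -
    have "(\<Sum>(i,j)\<in>{(i::'n,j). i < j}. partial i (partial i (partial j (partial j f))) x)
      = (\<Sum>(i,j)\<in>{(i::'n,j). i < j}. \<Sum>a\<in>S. c a * (real (a j) * real (a j - 1) * real (a i) * real (a i - 1) * mon (a(j:=a j - 2, i:=a i - 2)) x))"
      by (rule sum.cong[OF refl]) (auto simp: D22)
    also have "\<dots> = (\<Sum>a\<in>S. c a * AP a)"
      unfolding AP_def case_prod_beta sum_distrib_left by (rule sum.swap)
    finally show ?thesis .
  qed
  show ?thesis
    unfolding ST R0 R2 R4 RP
    by (simp add: K sum.distrib sum_distrib_left sum_divide_distrib algebra_simps cong: sum.cong)
qed

end
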